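(* Let $C_1,C_2>0$ and let $f_k:[-1/2,1/2]\to[0,+\infty]$, $k\in\mathbb N$, be even functions, non-increasing on $[0,1/2]$. Assume: (i) for every $k$ and every pair of numbers $\varepsilon_{*,k}\le\alpha_{*,k}$ in $[0,1/2]$ such that $f_k(x_1)\ge 4$ for all $x_1\in[0,\varepsilon_{*,k})$ and $f_k(x_1)\ge 2f_k(y_1)$ for all $x_1\in[0,\varepsilon_{*,k})$, $y_1\in(\alpha_{*,k},1/2]$, it holds $$\int_0^{\varepsilon_{*,k}}\left[\int_{\alpha_{*,k}}^{1/2}\frac{f_k^{n-1}(x_1)}{|x_1-y_1|^{1+s}}\,dy_1\right]dx_1\le C_1;$$ (ii) $\int_0^{1/2}f_k^{n-1}(x_1)\,dx_1=C_2$ for every $k$. Then there exists a function $f$ such that, up to a subsequence, $f_k\to f$ almost everywhere in $[-1/2,1/2]$ as $k\to+\infty$, and $\int_0^{1/2}f^{n-1}(x_1)\,dx_1=C_2$.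
   Context: Fix an integer $n\ge 2$ and $s\in(0,1)$. *)

theory Defs
  imports "HOL-Analysis.Analysis"
begin

end

theory Submission
  imports Defs "HOL-Library.Diagonal_Subsequence"
begin


lemma ennreal_div_bound:
  fixes X :: ennreal
  assumes "0 < c" "0 \<le> D" "X * ennreal c \<le> ennreal D"
  shows "X \<le> ennreal (D / c)"
proof (cases X rule: ennreal_cases)
  case (real x)
  then have "ennreal (x * c) \<le> ennreal D" using assms by (simp add: ennreal_mult)
  then have "x * c \<le> D" using assms by (simp add: ennreal_le_iff)
  then have "x \<le> D / c" using assms by (simp add: field_simps)
  then show ?thesis using real by (simp add: ennreal_leI)
next
  case top
  then show ?thesis using assms by (simp add: ennreal_mult_top top_unique)
qed

lemma tendsto_power_ennreal:
  fixes u :: "nat \<Rightarrow> ennreal"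
  assumes "u \<longlonglongrightarrow> l"
  shows "(\<lambda>j. u j ^ m) \<longlonglongrightarrow> l ^ m"
proof (induction m)
  case 0 then show ?case by simp
next
  case (Suc m)
  have "(\<lambda>j. u j * u j ^ m) \<longlonglongrightarrow> l * l ^ m"
  proof (rule tendsto_mult_ennreal[OF assms Suc])
    show "\<not> (l = 0 \<and> l ^ m = \<infinity> \<or> l = \<infinity> \<and> l ^ m = 0)"
      by (auto simp: power_eq_top_ennreal power_0_left split: if_splits)
  qed
  then show ?case by simp
qed

lemma antimono_borel:
  fixes h :: "real \<Rightarrow> ennreal"
  assumes "\<And>x y. x \<le> y \<Longrightarrow> h y \<le> h x"
  shows "h \<in> borel_measurable borel"
proof (rule borel_measurableI_greater)
  fix c
  have "is_interval {x. c < h x}"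
    unfolding is_interval_1 using assms by (auto intro: less_le_trans)
  then show "{x \<in> space borel. c < h x} \<in> sets borel"
    using real_interval_borel_measurable by simp
qed

lemma countable_jumps:
  fixes a b :: "real \<Rightarrow> ennreal"
  assumes "\<And>x y. x \<in> S \<Longrightarrow> y \<in> S \<Longrightarrow> x < y \<Longrightarrow> b y \<le> a x"
  shows "countable {x\<in>S. a x < b x}"
proof -
  define T where "T = {x\<in>S. a x < b x}"
  define q where "q x = (SOME r::rat. a x < ennreal (real_of_rat r) \<and> ennreal (real_of_rat r) < b x)" for x
  have q: "a x < ennreal (real_of_rat (q x)) \<and> ennreal (real_of_rat (q x)) < b x" if "x \<in> T" for x
  proof -
    from that have "a x < b x" by (simp add: T_def)
    from ennreal_rat_dense[OF this] obtain r :: rat where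
      "a x < real_of_rat r" "real_of_rat r < b x" by blast
    then have "\<exists>r::rat. a x < ennreal (real_of_rat r) \<and> ennreal (real_of_rat r) < b x" by blast
    then show ?thesis unfolding q_def by (rule someI_ex)
  qed
  have "inj_on q T"
  proof (rule inj_onI)
    fix x y assume xy: "x \<in> T" "y \<in> T" "q x = q y"
    show "x = y"
    proof (rule ccontr)
      assume "x \<noteq> y"
      then have "x < y \<or> y < x" by auto
      then show False
      proof
        assume "x < y"
        then have "b y \<le> a x" using assms xy by (auto simp: T_def)
        then show False using q[OF xy(1)] q[OF xy(2)] xy(3) by (metis leD less_trans)
      next
        assume "y < x"
        then have "b x \<le> a y" using assms xy by (auto simp: T_def)
        then show False using q[OF xy(1)] q[OF xy(2)] xy(3) by (metis leD less_trans)
      qed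
    qed
  qed
  then show ?thesis unfolding T_def[symmetric]
    by (rule countable_image_inj_on[rotated]) simp
qed


lemma ennreal_subseq_conv:
  fixes u :: "nat \<Rightarrow> ennreal"
  shows "\<exists>r. strict_mono r \<and> convergent (\<lambda>k. u (r k))"
proof -
  obtain r where r: "strict_mono r" "monoseq (\<lambda>n. u (r n))"
    using seq_monosub by blast
  from r(2) have "convergent (\<lambda>k. u (r k))"
    unfolding monoseq_def
  proof
    assume "\<forall>m n. m \<le> n \<longrightarrow> u (r m) \<le> u (r n)"
    then have "incseq (\<lambda>k. u (r k))" by (simp add: incseq_def)
    then show ?thesis using LIMSEQ_SUP convergent_def by blast
  next
    assume "\<forall>m n. m \<le> n \<longrightarrow> u (r n) \<le> u (r m)"
    then have "decseq (\<lambda>k. u (r k))" by (simp add: decseq_def)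
    then show ?thesis using LIMSEQ_INF convergent_def by blast
  qed
  with r show ?thesis by blast
qed

lemma diag_rat:
  fixes f :: "nat \<Rightarrow> real \<Rightarrow> ennreal"
  shows "\<exists>d. strict_mono d \<and> (\<forall>q\<in>\<rat>. convergent (\<lambda>k. f (d k) q))"
proof -
  obtain m :: "real \<Rightarrow> nat" where "bij_betw m \<rat> UNIV"
    using countable_rat Rats_infinite by (erule countableE_infinite)
  then obtain r :: "nat \<Rightarrow> real" where bij: "bij_betw r UNIV \<rat>"
    using bij_betw_inv by blast
  let ?P = "\<lambda>n. \<lambda>s. convergent (\<lambda>k. f (s k) (r n))"
  interpret nat: subseqs ?P
  proof (unfold subseqs_def, auto)
    fix n :: nat and s :: "nat \<Rightarrow> nat" assume s: "strict_mono s"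
    obtain s' where "strict_mono s'" "convergent (\<lambda>k. f (s (s' k)) (r n))"
      using ennreal_subseq_conv[of "\<lambda>k. f (s k) (r n)"] by blast
    then show "\<exists>r'. strict_mono r' \<and> convergent (\<lambda>k. f (s (r' k)) (r n))" by blast
  qed
  define d where "d = nat.diagseq"
  have subseq: "strict_mono d"
    unfolding d_def using nat.subseq_diagseq by auto
  have rat_cnv: "?P n d" for n
  proof -
    have Pn_seqseq: "?P n (nat.seqseq (Suc n))"
      by (rule nat.seqseq_holds)
    have 1: "(\<lambda>k. f ((nat.seqseq (Suc n) \<circ> (\<lambda>k. nat.fold_reduce (Suc n) k
      (Suc n + k))) k) (r n)) = (\<lambda>k. f (nat.seqseq (Suc n) k) (r n)) \<circ>
      (\<lambda>k. nat.fold_reduce (Suc n) k (Suc n + k))"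
      by auto
    have 2: "?P n (d \<circ> ((+) (Suc n)))"
      unfolding d_def nat.diagseq_seqseq 1
      by (intro convergent_subseq_convergent Pn_seqseq nat.subseq_diagonal_rest)
    then obtain L where 3: "(\<lambda>na. f (d (na + Suc n)) (r n)) \<longlonglongrightarrow> L"
      by (auto simp: add.commute dest: convergentD)
    then have "(\<lambda>k. f (d k) (r n)) \<longlonglongrightarrow> L"
      by (rule LIMSEQ_offset)
    then show ?thesis
      by (auto simp: convergent_def)
  qed
  have "\<forall>q\<in>\<rat>. convergent (\<lambda>k. f (d k) q)"
  proof
    fix q :: real assume "q \<in> \<rat>"
    then obtain n where "q = r n" using bij by (metis bij_betw_def imageE)
    then show "convergent (\<lambda>k. f (d k) q)" using rat_cnv by simp
  qed
  with subseq show ?thesis by blast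
qed


lemma helly_ennreal:
  fixes f :: "nat \<Rightarrow> real \<Rightarrow> ennreal"
  assumes mono: "\<And>k x y. 0 \<le> x \<Longrightarrow> x \<le> y \<Longrightarrow> y \<le> 1/2 \<Longrightarrow> f k y \<le> f k x"
  shows "\<exists>d N. strict_mono d \<and> countable N \<and>
           (\<forall>x\<in>{0..1/2} - N. (\<lambda>j. f (d j) x) \<longlonglongrightarrow> liminf (\<lambda>j. f (d j) x))"
proof -
  obtain d where d: "strict_mono d" "\<And>q. q\<in>\<rat> \<Longrightarrow> convergent (\<lambda>k. f (d k) q)"
    using diag_rat[of f] by blast
  define L where "L q = lim (\<lambda>k. f (d k) q)" for q
  have Lt: "(\<lambda>k. f (d k) q) \<longlonglongrightarrow> L q" if "q \<in> \<rat>" for q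
    using d(2)[OF that] unfolding L_def by (simp add: convergent_LIMSEQ_iff)
  define a where "a x = (SUP q\<in>{q\<in>\<rat>. x < q \<and> q \<le> 1/2}. L q)" for x
  define b where "b x = (INF q\<in>{q\<in>\<rat>. 0 \<le> q \<and> q < x}. L q)" for x
  define S where "S = {0<..<(1/2::real)}"
  have jump: "b y \<le> a x" if "x \<in> S" "y \<in> S" "x < y" for x y
  proof -
    obtain q where q: "q \<in> \<rat>" "x < q" "q < y" using Rats_dense_in_real[OF \<open>x < y\<close>] by blast
    have "b y \<le> L q" unfolding b_def by (rule INF_lower) (use q that in \<open>auto simp: S_def\<close>)
    also have "L q \<le> a x" unfolding a_def by (rule SUP_upper) (use q that in \<open>auto simp: S_def\<close>)
    finally show ?thesis .
  qed
  define N where "N = {0, 1/2} \<union> {x\<in>S. a x < b x}"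
  have cN: "countable N" unfolding N_def using countable_jumps[of S b a, OF jump] by auto
  have conv: "(\<lambda>j. f (d j) x) \<longlonglongrightarrow> liminf (\<lambda>j. f (d j) x)" if x: "x \<in> {0..1/2} - N" for x
  proof -
    have xS: "x \<in> S" and ba: "b x \<le> a x" using x by (auto simp: N_def S_def)
    have "limsup (\<lambda>j. f (d j) x) \<le> b x" unfolding b_def
    proof (rule INF_greatest)
      fix q assume q: "q \<in> {q\<in>\<rat>. 0 \<le> q \<and> q < x}"
      have "limsup (\<lambda>j. f (d j) x) \<le> limsup (\<lambda>j. f (d j) q)"
        by (rule Limsup_mono) (use q xS mono in \<open>auto simp: S_def\<close>)
      also have "\<dots> = L q" using lim_imp_Limsup[OF _ Lt] q by simp
      finally show "limsup (\<lambda>j. f (d j) x) \<le> L q" .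
    qed
    moreover have "a x \<le> liminf (\<lambda>j. f (d j) x)" unfolding a_def
    proof (rule SUP_least)
      fix q assume q: "q \<in> {q\<in>\<rat>. x < q \<and> q \<le> 1/2}"
      have "L q = liminf (\<lambda>j. f (d j) q)" using lim_imp_Liminf[OF _ Lt] q by simp
      also have "\<dots> \<le> liminf (\<lambda>j. f (d j) x)"
        by (rule Liminf_mono) (use q xS mono in \<open>auto simp: S_def\<close>)
      finally show "L q \<le> liminf (\<lambda>j. f (d j) x)" .
    qed
    moreover have "liminf (\<lambda>j. f (d j) x) \<le> limsup (\<lambda>j. f (d j) x)"
      by (rule Liminf_le_Limsup) simp
    ultimately have "limsup (\<lambda>j. f (d j) x) = liminf (\<lambda>j. f (d j) x)"
      using ba by (meson order.trans antisym)
    then show ?thesis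
      by (simp add: tendsto_iff_Liminf_eq_Limsup)
  qed
  show ?thesis using d(1) cN conv by blast
qed


lemma val_bound:
  fixes \<phi> :: "real \<Rightarrow> ennreal" and m :: nat
  assumes mono: "\<And>x y. 0 \<le> x \<Longrightarrow> x \<le> y \<Longrightarrow> y \<le> 1/2 \<Longrightarrow> \<phi> y \<le> \<phi> x"
    and hii: "(\<integral>\<^sup>+x\<in>{0..1/2}. \<phi> x ^ m \<partial>lborel) = ennreal C2"
    and C2: "0 \<le> C2" and a: "0 < a" "a \<le> 1/2"
  shows "\<phi> a ^ m \<le> ennreal (C2 / a)"
proof (rule ennreal_div_bound[OF a(1) C2])
  have "\<phi> a ^ m * ennreal a = (\<integral>\<^sup>+x. \<phi> a ^ m * indicator {0..a} x \<partial>lborel)"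
    using a by (simp add: nn_integral_cmult_indicator)
  also have "\<dots> \<le> (\<integral>\<^sup>+x\<in>{0..1/2}. \<phi> x ^ m \<partial>lborel)"
    by (rule nn_integral_mono) (use a mono in \<open>auto split: split_indicator intro: power_mono_ennreal\<close>)
  finally show "\<phi> a ^ m * ennreal a \<le> ennreal C2" using hii by simp
qed

lemma clamp_antimono:
  fixes \<phi> :: "real \<Rightarrow> ennreal"
  assumes mono: "\<And>x y. 0 \<le> x \<Longrightarrow> x \<le> y \<Longrightarrow> y \<le> 1/2 \<Longrightarrow> \<phi> y \<le> \<phi> x"
  shows "(\<lambda>x. \<phi> (min (1/2) (max 0 x))) \<in> borel_measurable borel"
  by (rule antimono_borel) (rule mono, auto)

lemma set_int_clamp:
  fixes \<phi> :: "real \<Rightarrow> ennreal"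
  assumes "S \<subseteq> {0..1/2}"
  shows "(\<integral>\<^sup>+x\<in>S. \<phi> x ^ m \<partial>lborel) = (\<integral>\<^sup>+x\<in>S. \<phi> (min (1/2) (max 0 x)) ^ m \<partial>lborel)"
proof (rule nn_integral_cong)
  fix x show "\<phi> x ^ m * indicator S x = \<phi> (min (1/2) (max 0 x)) ^ m * indicator S x"
  proof (cases "x \<in> S")
    case True
    then have "min (1/2) (max 0 x) = x" using assms by auto
    then show ?thesis by simp
  qed simp
qed


lemma tail_bound:
  fixes \<phi> :: "real \<Rightarrow> ennreal" and m :: nat and s C1 C2 A \<delta> :: real
  assumes s: "0 < s" and C1: "0 < C1" and C2: "0 \<le> C2"
    and mono: "\<And>x y. 0 \<le> x \<Longrightarrow> x \<le> y \<Longrightarrow> y \<le> 1/2 \<Longrightarrow> \<phi> y \<le> \<phi> x"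
    and hi: "\<And>\<epsilon> \<alpha>. 0 \<le> \<epsilon> \<Longrightarrow> \<epsilon> \<le> \<alpha> \<Longrightarrow> \<alpha> \<le> 1/2 \<Longrightarrow>
        (\<forall>x\<in>{0..<\<epsilon>}. (4::ennreal) \<le> \<phi> x) \<Longrightarrow>
        (\<forall>x\<in>{0..<\<epsilon>}. \<forall>y\<in>{\<alpha><..1/2}. 2 * \<phi> y \<le> \<phi> x) \<Longrightarrow>
        (\<integral>\<^sup>+x\<in>{0..<\<epsilon>}. (\<integral>\<^sup>+y\<in>{\<alpha><..1/2}.
            \<phi> x ^ m * ennreal (1 / \<bar>x - y\<bar> powr (1 + s)) \<partial>lborel) \<partial>lborel)
          \<le> ennreal C1"
    and hii: "(\<integral>\<^sup>+x\<in>{0..1/2}. \<phi> x ^ m \<partial>lborel) = ennreal C2"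
    and d: "0 < \<delta>" "\<delta> \<le> A" "A \<le> 1/4"
  shows "(\<integral>\<^sup>+x\<in>{0..\<delta>}. \<phi> x ^ m \<partial>lborel)
           \<le> ennreal (C1 / (A * (1 / (2*A) powr (1+s))) + \<delta> * (4^m + 2^m * (C2 / A)))"
proof -
  define \<psi> where "\<psi> x = \<phi> (min (1/2) (max 0 x))" for x
  have [measurable]: "\<psi> \<in> borel_measurable borel"
    unfolding \<psi>_def by (rule clamp_antimono[OF mono])
  have conv: "(\<integral>\<^sup>+x\<in>S. \<phi> x ^ m \<partial>lborel) = (\<integral>\<^sup>+x\<in>S. \<psi> x ^ m \<partial>lborel)"
    if "S \<subseteq> {0..1/2}" for S
    unfolding \<psi>_def by (rule set_int_clamp[OF that])
  have A0: "0 < A" using d by simp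
  have A12: "A \<le> 1/2" using d(3) by (simp add: field_simps)
  define B where "B = 4^m + 2^m * (C2 / A)"
  have B0: "0 \<le> B" unfolding B_def using C2 A0 by simp
  define Lam where "Lam = max 4 (2 * \<phi> A)"
  have fA: "\<phi> A ^ m \<le> ennreal (C2 / A)"
    by (rule val_bound[OF mono hii C2 A0 A12])
  have Lm: "Lam ^ m \<le> ennreal B"
  proof -
    have e: "ennreal B = 4 ^ m + 2 ^ m * ennreal (C2 / A)"
    proof -
      have e1: "ennreal ((2::real)^m) = 2^m" "ennreal ((4::real)^m) = 4^m"
        by (metis ennreal_numeral ennreal_power zero_le_numeral)+
      have "ennreal B = ennreal (4^m) + ennreal (2^m * (C2 / A))"
        unfolding B_def using C2 A0 by (intro ennreal_plus) auto
      also have "ennreal (2^m * (C2 / A)) = ennreal (2^m) * ennreal (C2 / A)"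
        by (rule ennreal_mult) (use C2 A0 in auto)
      finally show ?thesis using e1 by simp
    qed
    have "Lam ^ m \<le> 4 ^ m + 2 ^ m * \<phi> A ^ m"
      unfolding Lam_def
      by (cases "4 \<le> 2 * \<phi> A") (auto simp: max_def power_mult_distrib)
    also have "\<dots> \<le> 4 ^ m + 2 ^ m * ennreal (C2 / A)"
      using fA by (intro add_left_mono mult_left_mono) auto
    finally show ?thesis using e by simp
  qed
  define E where "E = {x\<in>{0..A}. Lam \<le> \<phi> x}"
  define \<epsilon> where "\<epsilon> = Sup ({0} \<union> E)"
  have bdd: "bdd_above ({0} \<union> E)" unfolding E_def by (rule bdd_aboveI[of _ A]) (use A0 in auto)
  have \<epsilon>0: "0 \<le> \<epsilon>" unfolding \<epsilon>_def by (rule cSup_upper[OF _ bdd]) simp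
  have \<epsilon>A: "\<epsilon> \<le> A" unfolding \<epsilon>_def by (rule cSup_least) (use A0 in \<open>auto simp: E_def\<close>)
  have low: "Lam \<le> \<phi> x" if x: "x \<in> {0..<\<epsilon>}" for x
  proof -
    from x have "x < Sup ({0} \<union> E)" by (simp add: \<epsilon>_def)
    then obtain z where z: "z \<in> {0} \<union> E" "x < z" using less_cSup_iff[OF _ bdd] by auto
    with x have zE: "z \<in> E" by auto
    then have "Lam \<le> \<phi> z" by (simp add: E_def)
    also have "\<phi> z \<le> \<phi> x" using zE x z d by (intro mono) (auto simp: E_def)
    finally show ?thesis .
  qed
  have high: "\<phi> x < Lam" if "\<epsilon> < x" "x \<le> A" for x
  proof (rule ccontr)
    assume "\<not> \<phi> x < Lam"
    then have "x \<in> {0} \<union> E" using that \<epsilon>0 by (auto simp: E_def)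
    then have "x \<le> \<epsilon>" unfolding \<epsilon>_def by (rule cSup_upper[OF _ bdd])
    with that show False by simp
  qed
  have I1: "(\<integral>\<^sup>+x\<in>{0..<\<epsilon>}. (\<integral>\<^sup>+y\<in>{A<..1/2}.
            \<phi> x ^ m * ennreal (1 / \<bar>x - y\<bar> powr (1 + s)) \<partial>lborel) \<partial>lborel) \<le> ennreal C1"
  proof (rule hi[OF \<epsilon>0 \<epsilon>A])
    show "A \<le> 1/2" by (rule A12)
    show "\<forall>x\<in>{0..<\<epsilon>}. (4::ennreal) \<le> \<phi> x"
      using low unfolding Lam_def by (auto intro: order.trans)
    show "\<forall>x\<in>{0..<\<epsilon>}. \<forall>y\<in>{A<..1/2}. 2 * \<phi> y \<le> \<phi> x"
    proof (intro ballI)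
      fix x y assume x: "x \<in> {0..<\<epsilon>}" and y: "y \<in> {A<..1/2}"
      have "2 * \<phi> y \<le> 2 * \<phi> A" using y A0 by (intro mult_left_mono mono) auto
      also have "\<dots> \<le> Lam" unfolding Lam_def by simp
      also have "\<dots> \<le> \<phi> x" using low x by simp
      finally show "2 * \<phi> y \<le> \<phi> x" .
    qed
  qed
  define p where "p = 1 / (2*A) powr (1+s)"
  define K where "K = A * p"
  have p0: "0 < p" unfolding p_def using A0 by simp
  have K0: "0 < K" unfolding K_def using A0 p0 by simp
  have inner: "\<phi> x ^ m * ennreal K \<le> (\<integral>\<^sup>+y\<in>{A<..1/2}. \<phi> x ^ m * ennreal (1 / \<bar>x - y\<bar> powr (1 + s)) \<partial>lborel)"
    if x: "x \<in> {0..<\<epsilon>}" for x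
  proof -
    have "\<phi> x ^ m * ennreal K = (\<integral>\<^sup>+y. (\<phi> x ^ m * ennreal p) * indicator {A<..2*A} y \<partial>lborel)"
    proof -
      have "(\<integral>\<^sup>+y. (\<phi> x ^ m * ennreal p) * indicator {A<..2*A} y \<partial>lborel)
           = (\<phi> x ^ m * ennreal p) * emeasure lborel {A<..2*A}"
        by (rule nn_integral_cmult_indicator) simp
      also have "emeasure lborel {A<..2*A} = ennreal A" using A0 by simp
      finally show ?thesis using A0 p0 by (simp add: K_def ennreal_mult mult_ac)
    qed
    also have "\<dots> \<le> (\<integral>\<^sup>+y\<in>{A<..1/2}. \<phi> x ^ m * ennreal (1 / \<bar>x - y\<bar> powr (1 + s)) \<partial>lborel)"
    proof (rule nn_integral_mono)
      fix y
      show "\<phi> x ^ m * ennreal p * indicator {A<..2*A} y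
            \<le> \<phi> x ^ m * ennreal (1 / \<bar>x - y\<bar> powr (1 + s)) * indicator {A<..1/2} y"
      proof (cases "y \<in> {A<..2*A}")
        case True
        have pos: "0 < \<bar>x - y\<bar>" "\<bar>x - y\<bar> \<le> 2 * A" using True x \<epsilon>A by auto
        have "\<bar>x - y\<bar> powr (1+s) \<le> (2*A) powr (1+s)"
          using pos s by (intro powr_mono2) auto
        then have "p \<le> 1 / \<bar>x - y\<bar> powr (1 + s)"
          unfolding p_def using pos by (intro divide_left_mono) auto
        then have "ennreal p \<le> ennreal (1 / \<bar>x - y\<bar> powr (1 + s))" by (rule ennreal_leI)
        moreover have "y \<in> {A<..1/2}" using True d by auto
        ultimately show ?thesis using True by (auto intro: mult_left_mono)
      qed simp
    qed
    finally show ?thesis .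
  qed
  define J where "J = (\<integral>\<^sup>+x\<in>{0..<\<epsilon>}. \<phi> x ^ m \<partial>lborel)"
  have "J * ennreal K = (\<integral>\<^sup>+x. ennreal K * (\<psi> x ^ m * indicator {0..<\<epsilon>} x) \<partial>lborel)"
    unfolding J_def using \<epsilon>A d by (subst conv) (auto simp: nn_integral_cmult mult.commute)
  also have "\<dots> \<le> (\<integral>\<^sup>+x\<in>{0..<\<epsilon>}. (\<integral>\<^sup>+y\<in>{A<..1/2}.
            \<phi> x ^ m * ennreal (1 / \<bar>x - y\<bar> powr (1 + s)) \<partial>lborel) \<partial>lborel)"
  proof (rule nn_integral_mono)
    fix x
    show "ennreal K * (\<psi> x ^ m * indicator {0..<\<epsilon>} x) \<le> (\<integral>\<^sup>+y\<in>{A<..1/2}.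
            \<phi> x ^ m * ennreal (1 / \<bar>x - y\<bar> powr (1 + s)) \<partial>lborel) * indicator {0..<\<epsilon>} x"
    proof (cases "x \<in> {0..<\<epsilon>}")
      case True
      then have "\<psi> x = \<phi> x" unfolding \<psi>_def using \<epsilon>A d by (auto simp: min_def max_def)
      then show ?thesis using inner[OF True] True by (simp add: mult.commute)
    qed simp
  qed
  also have "\<dots> \<le> ennreal C1" by (rule I1)
  finally have J: "J \<le> ennreal (C1 / K)" using C1 K0 ennreal_div_bound by simp
  have "(\<integral>\<^sup>+x\<in>{0..\<delta>}. \<phi> x ^ m \<partial>lborel) = (\<integral>\<^sup>+x\<in>{0..\<delta>}. \<psi> x ^ m \<partial>lborel)"
    using d by (intro conv) auto
  also have "\<dots> \<le> (\<integral>\<^sup>+x. \<psi> x ^ m * indicator {0..<\<epsilon>} x + ennreal B * indicator {0..\<delta>} x \<partial>lborel)"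
  proof (rule nn_integral_mono_AE)
    show "AE x in lborel. \<psi> x ^ m * indicator {0..\<delta>} x
            \<le> \<psi> x ^ m * indicator {0..<\<epsilon>} x + ennreal B * indicator {0..\<delta>} x"
      using AE_lborel_singleton[of \<epsilon>]
    proof eventually_elim
      case (elim x)
      show ?case
      proof (cases "x \<in> {0..\<delta>}")
        case True
        show ?thesis
        proof (cases "x < \<epsilon>")
          case True
          with \<open>x \<in> {0..\<delta>}\<close> show ?thesis by simp
        next
          case False
          with elim have "\<epsilon> < x" by simp
          moreover have "x \<le> A" using \<open>x \<in> {0..\<delta>}\<close> d by simp
          ultimately have "\<phi> x < Lam" by (rule high)
          then have "\<phi> x ^ m \<le> Lam ^ m" by (intro power_mono_ennreal) simp
          also have "\<dots> \<le> ennreal B" by (rule Lm)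
          finally have "\<phi> x ^ m \<le> ennreal B" .
          moreover have "\<psi> x = \<phi> x" unfolding \<psi>_def using \<open>x \<in> {0..\<delta>}\<close> d by (auto simp: min_def max_def)
          ultimately show ?thesis using \<open>x \<in> {0..\<delta>}\<close> False by simp
        qed
      qed simp
    qed
  qed
  also have "\<dots> = (\<integral>\<^sup>+x\<in>{0..<\<epsilon>}. \<psi> x ^ m \<partial>lborel) + ennreal B * ennreal \<delta>"
    using d by (subst nn_integral_add) (auto simp: nn_integral_cmult_indicator)
  also have "(\<integral>\<^sup>+x\<in>{0..<\<epsilon>}. \<psi> x ^ m \<partial>lborel) = J"
    unfolding J_def using \<epsilon>A d by (intro conv[symmetric]) auto
  also have "J + ennreal B * ennreal \<delta> \<le> ennreal (C1 / K) + ennreal (\<delta> * B)"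
    using J B0 d by (intro add_mono) (auto simp: ennreal_mult mult.commute)
  also have "\<dots> = ennreal (C1 / K + \<delta> * B)"
    using C1 K0 B0 d by (simp add: ennreal_plus)
  finally show ?thesis unfolding K_def p_def B_def .
qed



lemma arith_choice:
  fixes s C1 C2 e :: real and m :: nat
  assumes s: "0 < s" "s < 1" and C1: "0 < C1" and C2: "0 \<le> C2" and e: "0 < e"
  shows "\<exists>A \<delta>. 0 < \<delta> \<and> \<delta> \<le> A \<and> A \<le> 1/4 \<and>
           C1 / (A * (1 / (2*A) powr (1+s))) + \<delta> * (4^m + 2^m * (C2 / A)) \<le> e"
proof -
  define t where "t = (e / (8*C1)) powr (1/s)"
  define A where "A = min (1/4) t"
  have t0: "0 < t" unfolding t_def using e C1 by simp
  have A0: "0 < A" unfolding A_def using t0 by simp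
  have "A powr s \<le> t powr s" using A0 s unfolding A_def by (intro powr_mono2) auto
  also have "t powr s = e / (8*C1)" unfolding t_def using s e C1 by (simp add: powr_powr)
  finally have As: "A powr s \<le> e / (8*C1)" .
  have "(2*A) powr (1+s) = 2 powr (1+s) * (A * A powr s)"
    using A0 by (simp add: powr_mult powr_add)
  then have eq1: "C1 / (A * (1 / (2*A) powr (1+s))) = C1 * 2 powr (1+s) * A powr s"
    using A0 by (simp add: field_simps)
  have "2 powr (1+s) \<le> (2::real) powr 2" using s by (intro powr_mono) auto
  then have p2: "2 powr (1+s) \<le> 4" by simp
  have "C1 * 2 powr (1+s) * A powr s \<le> C1 * 4 * (e / (8*C1))"
    using C1 p2 As by (intro mult_mono) auto
  also have "\<dots> = e/2" using C1 by simp
  finally have T1: "C1 / (A * (1 / (2*A) powr (1+s))) \<le> e/2" using eq1 by simp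
  define B where "B = 4^m + 2^m * (C2 / A)"
  have B1: "1 \<le> B" unfolding B_def using C2 A0 by (simp add: add_increasing2)
  define \<delta> where "\<delta> = min A (e / (2*B))"
  have d0: "0 < \<delta>" unfolding \<delta>_def using A0 e B1 by simp
  have "\<delta> * B \<le> (e / (2*B)) * B" unfolding \<delta>_def using B1 by (intro mult_right_mono) auto
  also have "\<dots> = e/2" using B1 by simp
  finally have T2: "\<delta> * B \<le> e/2" .
  have dA: "\<delta> \<le> A" unfolding \<delta>_def by simp
  have A4: "A \<le> 1/4" unfolding A_def by simp
  have "C1 / (A * (1 / (2*A) powr (1+s))) + \<delta> * B \<le> e" using T1 T2 by linarith
  then show ?thesis using d0 dA A4 unfolding B_def by blast
qed


theorem proposition5p1:
  fixes n :: nat and s C1 C2 :: real and f :: "nat \<Rightarrow> real \<Rightarrow> ennreal"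
  assumes n: "n \<ge> 2" and s: "0 < s" "s < 1"
    and C: "C1 > 0" "C2 > 0"
    and even: "\<And>k x. x \<in> {-1/2..1/2} \<Longrightarrow> f k (-x) = f k x"
    and noninc: "\<And>k x y. 0 \<le> x \<Longrightarrow> x \<le> y \<Longrightarrow> y \<le> 1/2 \<Longrightarrow> f k y \<le> f k x"
    and hyp_i: "\<And>k \<epsilon> \<alpha>. 0 \<le> \<epsilon> \<Longrightarrow> \<epsilon> \<le> \<alpha> \<Longrightarrow> \<alpha> \<le> 1/2 \<Longrightarrow>
        (\<forall>x\<in>{0..<\<epsilon>}. (4::ennreal) \<le> f k x) \<Longrightarrow>
        (\<forall>x\<in>{0..<\<epsilon>}. \<forall>y\<in>{\<alpha><..1/2}. 2 * f k y \<le> f k x) \<Longrightarrow>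
        (\<integral>\<^sup>+x\<in>{0..<\<epsilon>}. (\<integral>\<^sup>+y\<in>{\<alpha><..1/2}.
            f k x ^ (n - 1) * ennreal (1 / \<bar>x - y\<bar> powr (1 + s)) \<partial>lborel) \<partial>lborel)
          \<le> ennreal C1"
    and hyp_ii: "\<And>k. (\<integral>\<^sup>+x\<in>{0..1/2}. f k x ^ (n - 1) \<partial>lborel) = ennreal C2"
  shows "\<exists>g :: real \<Rightarrow> ennreal. \<exists>r :: nat \<Rightarrow> nat. strict_mono r \<and>
     (AE x in lborel. x \<in> {-1/2..1/2} \<longrightarrow> (\<lambda>j. f (r j) x) \<longlonglongrightarrow> g x) \<and>
     (\<integral>\<^sup>+x\<in>{0..1/2}. g x ^ (n - 1) \<partial>lborel) = ennreal C2"
  proof -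
  have m1: "1 \<le> n - 1" using n by simp
  have C20: "0 \<le> C2" using C(2) by simp
  obtain d N where d: "strict_mono d" "countable N"
    and dconv: "\<And>x. x \<in> {0..1/2} - N \<Longrightarrow> (\<lambda>j. f (d j) x) \<longlonglongrightarrow> liminf (\<lambda>j. f (d j) x)"
    using helly_ennreal[of f] noninc by blast
  define g where "g x = liminf (\<lambda>j. f (d j) \<bar>x\<bar>)" for x
  define N' where "N' = N \<union> uminus ` N"
  have cN': "countable N'" unfolding N'_def using d(2) by simp
  have AEN: "AE x in lborel. x \<notin> N'"
    by (rule AE_not_in[OF countable_imp_null_set_lborel[OF cN']])
  have AE1: "AE x in lborel. x \<in> {-1/2..1/2} \<longrightarrow> (\<lambda>j. f (d j) x) \<longlonglongrightarrow> g x"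
    using AEN
  proof eventually_elim
    case (elim x)
    show ?case
    proof
      assume x: "x \<in> {-1/2..1/2}"
      have ax: "\<bar>x\<bar> \<in> {0..1/2} - N"
      proof (cases "0 \<le> x")
        case True then show ?thesis using x elim by (auto simp: N'_def)
      next
        case False
        have "-x \<notin> N" using elim by (auto simp: N'_def image_iff)
        then show ?thesis using x False by auto
      qed
      have eq: "f k \<bar>x\<bar> = f k x" for k
      proof (cases "0 \<le> x")
        case False then show ?thesis using even[OF x, of k] by simp
      qed simp
      show "(\<lambda>j. f (d j) x) \<longlonglongrightarrow> g x"
        using dconv[OF ax] unfolding g_def eq .
    qed
  qed
  define \<psi> where "\<psi> k x = f k (min (1/2) (max 0 x))" for k x
  have [measurable]: "\<psi> k \<in> borel_measurable borel" for k
    unfolding \<psi>_def by (rule clamp_antimono) (rule noninc)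
  have conv: "(\<integral>\<^sup>+x\<in>S. f k x ^ (n-1) \<partial>lborel) = (\<integral>\<^sup>+x\<in>S. \<psi> k x ^ (n-1) \<partial>lborel)"
    if "S \<subseteq> {0..1/2}" for S k
    unfolding \<psi>_def by (rule set_int_clamp[OF that])
  have \<psi>eq: "\<psi> k x = f k x" if "x \<in> {0..1/2}" for k x
  proof -
    have "min (1/2) (max 0 x) = x" using that by auto
    then show ?thesis unfolding \<psi>_def by simp
  qed
  define G where "G x = liminf (\<lambda>j. \<psi> (d j) x)" for x
  have [measurable]: "G \<in> borel_measurable borel" unfolding G_def by measurable
  have Gconv: "(\<lambda>j. \<psi> (d j) x ^ (n-1)) \<longlonglongrightarrow> G x ^ (n-1)" if "x \<in> {0..1/2} - N" for x
  proof -
    have "(\<lambda>j. \<psi> (d j) x) \<longlonglongrightarrow> G x" unfolding G_def using dconv[OF that] that by (simp add: \<psi>eq)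
    then show ?thesis by (rule tendsto_power_ennreal)
  qed
  have AEN0: "AE x in lborel. x \<notin> N"
    by (rule AE_not_in[OF countable_imp_null_set_lborel[OF d(2)]])
  have AEconvS: "AE x in lborel. (\<lambda>j. \<psi> (d j) x ^ (n-1) * indicator S x) \<longlonglongrightarrow> G x ^ (n-1) * indicator S x"
    if "S \<subseteq> {0..1/2}" for S
    using AEN0
  proof eventually_elim
    case (elim x)
    show ?case
    proof (cases "x \<in> S")
      case True then show ?thesis using Gconv[of x] elim that by auto
    qed simp
  qed
  define U where "U x = G x ^ (n-1) * indicator {0..1/2::real} x" for x
  have intg: "(\<integral>\<^sup>+x\<in>{0..1/2}. g x ^ (n - 1) \<partial>lborel) = (\<integral>\<^sup>+x. U x \<partial>lborel)"
    unfolding U_def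
  proof (rule nn_integral_cong)
    fix x :: real
    show "g x ^ (n - 1) * indicator {0..1/2} x = G x ^ (n-1) * indicator {0..1/2} x"
    proof (cases "x \<in> {0..1/2}")
      case True
      then have "g x = G x" unfolding g_def G_def using \<psi>eq[OF True] True by simp
      then show ?thesis by simp
    qed simp
  qed
  have intk: "(\<integral>\<^sup>+x. \<psi> k x ^ (n-1) * indicator {0..1/2} x \<partial>lborel) = ennreal C2" for k
    using conv[of "{0..1/2}" k] hyp_ii[of k] by simp
  have le: "(\<integral>\<^sup>+x. U x \<partial>lborel) \<le> ennreal C2"
  proof -
    have "(\<integral>\<^sup>+x. U x \<partial>lborel) = (\<integral>\<^sup>+x. liminf (\<lambda>j. \<psi> (d j) x ^ (n-1) * indicator {0..1/2} x) \<partial>lborel)"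
      unfolding U_def
      by (rule nn_integral_cong_AE) (use AEconvS[of "{0..1/2}"] in \<open>auto elim!: eventually_mono simp: lim_imp_Liminf\<close>)
    also have "\<dots> \<le> liminf (\<lambda>j. (\<integral>\<^sup>+x. \<psi> (d j) x ^ (n-1) * indicator {0..1/2} x \<partial>lborel))"
      by (rule nn_integral_liminf) measurable
    also have "\<dots> = ennreal C2" unfolding intk by (simp add: Liminf_const)
    finally show ?thesis .
  qed
  have ge: "ennreal C2 \<le> (\<integral>\<^sup>+x. U x \<partial>lborel)"
  proof (rule ennreal_le_epsilon)
    fix e :: real assume e: "0 < e"
    obtain A \<delta> where Ad: "0 < \<delta>" "\<delta> \<le> A" "A \<le> 1/4"
      and Ae: "C1 / (A * (1 / (2*A) powr (1+s))) + \<delta> * (4^(n-1) + 2^(n-1) * (C2 / A)) \<le> e"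
      using arith_choice[OF s C(1) _ e, of C2 "n-1"] C(2) by auto
    have \<delta>12: "\<delta> \<le> 1/2" using Ad by simp
    have tb: "(\<integral>\<^sup>+x\<in>{0..\<delta>}. f k x ^ (n-1) \<partial>lborel) \<le> ennreal e" for k
    proof -
      have "(\<integral>\<^sup>+x\<in>{0..\<delta>}. f k x ^ (n-1) \<partial>lborel)
           \<le> ennreal (C1 / (A * (1 / (2*A) powr (1+s))) + \<delta> * (4^(n-1) + 2^(n-1) * (C2 / A)))"
        by (rule tail_bound[OF s(1) C(1) _ noninc hyp_i hyp_ii Ad]) (use C in auto)
      also have "\<dots> \<le> ennreal e" using Ae by (rule ennreal_leI)
      finally show ?thesis .
    qed
    define v where "v j x = \<psi> (d j) x ^ (n-1) * indicator {\<delta><..1/2} x" for j x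
    define V where "V x = G x ^ (n-1) * indicator {\<delta><..1/2::real} x" for x
    define w where "w x = ennreal (C2/\<delta>) * indicator {\<delta><..1/2::real} x" for x
    have lim: "(\<lambda>j. \<integral>\<^sup>+x. v j x \<partial>lborel) \<longlonglongrightarrow> (\<integral>\<^sup>+x. V x \<partial>lborel)"
    proof (rule nn_integral_dominated_convergence)
      show "v j \<in> borel_measurable lborel" for j unfolding v_def by measurable
      show "V \<in> borel_measurable lborel" unfolding V_def by measurable
      show "w \<in> borel_measurable lborel" unfolding w_def by measurable
      show "AE x in lborel. v j x \<le> w x" for j
      proof (rule AE_I2)
        fix x
        show "v j x \<le> w x"
        proof (cases "x \<in> {\<delta><..1/2}")
          case True
          then have "\<psi> (d j) x = f (d j) x" using Ad by (intro \<psi>eq) auto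
          moreover have "f (d j) x \<le> f (d j) \<delta>" using True Ad by (intro noninc) auto
          ultimately have "\<psi> (d j) x ^ (n-1) \<le> f (d j) \<delta> ^ (n-1)" by (simp add: power_mono_ennreal)
          also have "\<dots> \<le> ennreal (C2 / \<delta>)"
            by (rule val_bound[OF noninc hyp_ii C20 Ad(1) \<delta>12])
          finally show ?thesis using True unfolding v_def w_def by simp
        qed (simp add: v_def w_def)
      qed
      show "(\<integral>\<^sup>+x. w x \<partial>lborel) < \<infinity>"
        unfolding w_def using Ad by (simp add: nn_integral_cmult_indicator ennreal_mult_less_top)
      show "AE x in lborel. (\<lambda>j. v j x) \<longlonglongrightarrow> V x"
        unfolding v_def V_def by (rule AEconvS) (use Ad in auto)
    qed
    have split: "ennreal C2 \<le> ennreal e + (\<integral>\<^sup>+x. v j x \<partial>lborel)" for j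
    proof -
      have "ennreal C2 = (\<integral>\<^sup>+x. \<psi> (d j) x ^ (n-1) * indicator {0..1/2} x \<partial>lborel)"
        using intk by simp
      also have "\<dots> \<le> (\<integral>\<^sup>+x. \<psi> (d j) x ^ (n-1) * indicator {0..\<delta>} x + v j x \<partial>lborel)"
        by (rule nn_integral_mono) (auto simp: v_def split: split_indicator)
      also have "\<dots> = (\<integral>\<^sup>+x. \<psi> (d j) x ^ (n-1) * indicator {0..\<delta>} x \<partial>lborel) + (\<integral>\<^sup>+x. v j x \<partial>lborel)"
        by (rule nn_integral_add) (auto simp: v_def)
      also have "(\<integral>\<^sup>+x. \<psi> (d j) x ^ (n-1) * indicator {0..\<delta>} x \<partial>lborel) \<le> ennreal e"
        using tb[of "d j"] conv[of "{0..\<delta>}" "d j"] \<delta>12 by simp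
      finally show ?thesis by (simp add: add_right_mono)
    qed
    have "ennreal C2 \<le> ennreal e + (\<integral>\<^sup>+x. V x \<partial>lborel)"
      by (rule LIMSEQ_le_const[OF tendsto_add[OF tendsto_const lim]]) (use split in auto)
    also have "(\<integral>\<^sup>+x. V x \<partial>lborel) \<le> (\<integral>\<^sup>+x. U x \<partial>lborel)"
      unfolding U_def V_def using Ad by (intro nn_integral_mono) (auto split: split_indicator)
    finally show "ennreal C2 \<le> (\<integral>\<^sup>+x. U x \<partial>lborel) + ennreal e"
      by (simp add: add.commute add_left_mono)
  qed
  have "(\<integral>\<^sup>+x\<in>{0..1/2}. g x ^ (n - 1) \<partial>lborel) = ennreal C2"
    using le ge intg by simp
  then show ?thesis using d(1) AE1 by blast
qed

end
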